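(* Let $m,k,n\ge1$ be integers; let $\lambda_i,\mu_i>0$ ($i\le k$), $\alpha_j,\beta_j,u_j,v_j>0$ ($j\le n$); let $\theta:\{0,\dots,m\}\to\mathbb{R}$ satisfy $0\le\theta\le1$, $\theta(b)>0$ for $b<m$, $\theta(m)=0$. Consider the CTMC on the set of vectors $w=(x_1,\dots,x_k;a_1,\dots,a_n)$, $x_i\in\mathbb{Z}_{\ge0}$, $a_j\in\{I,W,T\}$, with $\mathrm{busy}(w)=\sum_i x_i+\sum_j1_{\{a_j=T\}}\le m$, whose only nonzero rates are: $x\to x+e_i$ at rate $\lambda_i\theta(\mathrm{busy}(w))$ and $x+e_i\to x$ at rate $(x_i+1)\mu_i$; and, for each $j$ changing only $a_j$: $I\to W$ at rate $\alpha_j$, $W\to I$ at rate $\beta_j$, $W\to T$ at rate $u_j\theta(\mathrm{busy}(w))$ ($w$ the current state), $T\to W$ at rate $v_j$. Its steady state distribution has the form $p(w)=B\big(\prod_{r=0}^{\mathrm{busy}(w)-1}\theta(r)\big)\big(\prod_{i}\rho_i^{x_i}/x_i!\big)\prod_j(\alpha_j/\beta_j)^{1_{\{a_j=W\}}}(\alpha_ju_j/(\beta_jv_j))^{1_{\{a_j=T\}}}$, $\rho_i=\lambda_i/\mu_i$, with normalizing constant $B$. Let $\rho=\sum_{i=1}^k\rho_i$ and $\mathrm{i}=\sqrt{-1}$. For $j\in\{1,\dots,n\}$ let $P[I_j]$ be the steady state probability that $a_j=I$, and define $$c_{j,b}=\frac1n\sum_{t=0}^{n-1}\prod_{l\in\{1,\dots,n\}\setminus\{j\}}\Big[1+\frac{\alpha_l}{\beta_l}+e^{\frac{-2\pi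 \mathrm{i} t}{n}}\frac{\alpha_lu_l}{\beta_lv_l}\Big]e^{\frac{2\pi \mathrm{i} tb}{n}}\qquad\forall b\in\{0,1,\dots,\min[n-1,m]\}.$$ Then $$P[I_j]=B\sum_{b=0}^{\min[n-1,m]}\sum_{x=0}^{m-b}\Big(\prod_{r=0}^{x+b-1}\theta(r)\Big)\frac{\rho^x}{x!}c_{j,b}.$$ In the special case with no non-persistent users (i.e. $\rho\to0$), $$P[I_j]=\tilde B\sum_{b=0}^{\min[n-1,m]}\Big(\prod_{r=0}^{b-1}\theta(r)\Big)c_{j,b},$$ where $\tilde B$ is the normalizing constant of that special case.
   Context: Multi-channel access model with $m$ channels, $k$ classes of non-persistent users and $n$ persistent users with activity states Idle ($I$), Waiting ($W$), Transmitting ($T$). Empty products $\prod_{r=0}^{-1}\theta(r)$ equal $1$. In the case with no non-persistent users, the steady state probability of persistent configuration $a$ (with $\sum_j1_{\{a_j=T\}}\le m$) is $\tilde B\big(\prod_{r=0}^{\sum_j1_{\{a_j=T\}}-1}\theta(r)\big)\prod_j(\alpha_j/\beta_j)^{1_{\{a_j=W\}}}(\alpha_ju_j/(\beta_jv_j))^{1_{\{a_j=T\}}}$. *)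

theory Defs
  imports Complex_Main
begin

datatype act = Idle | Wait | Trans

text \<open>A state is a pair (x, a): x i = number of active class-i non-persistent users
  (i in 1..k, x i = 0 outside), a j = activity of persistent user j (j in 1..n, Idle outside).\<close>

definition nT :: "nat \<Rightarrow> (nat \<Rightarrow> act) \<Rightarrow> nat" where
  "nT n a = card {j \<in> {1..n}. a j = Trans}"

definition busy :: "nat \<Rightarrow> nat \<Rightarrow> (nat \<Rightarrow> nat) \<Rightarrow> (nat \<Rightarrow> act) \<Rightarrow> nat" where
  "busy k n x a = (\<Sum>i=1..k. x i) + nT n a"

definition states :: "nat \<Rightarrow> nat \<Rightarrow> nat \<Rightarrow> ((nat \<Rightarrow> nat) \<times> (nat \<Rightarrow> act)) set" where
  "states m k n = {(x, a). (\<forall>i. i \<notin> {1..k} \<longrightarrow> x i = 0) \<and> (\<forall>j. j \<notin> {1..n} \<longrightarrow> a j = Idle)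
                          \<and> busy k n x a \<le> m}"

definition thprod :: "(nat \<Rightarrow> real) \<Rightarrow> nat \<Rightarrow> real" where
  "thprod theta b = (\<Prod>r<b. theta r)"

definition pfactor :: "nat \<Rightarrow> (nat \<Rightarrow> real) \<Rightarrow> (nat \<Rightarrow> real) \<Rightarrow> (nat \<Rightarrow> real) \<Rightarrow> (nat \<Rightarrow> real)
    \<Rightarrow> (nat \<Rightarrow> act) \<Rightarrow> real" where
  "pfactor n alpha beta u v a =
     (\<Prod>j=1..n. (alpha j / beta j) ^ (if a j = Wait then 1 else 0)
                * (alpha j * u j / (beta j * v j)) ^ (if a j = Trans then 1 else 0))"

definition weight :: "nat \<Rightarrow> nat \<Rightarrow> (nat \<Rightarrow> real) \<Rightarrow> (nat \<Rightarrow> real) \<Rightarrow> (nat \<Rightarrow> real) \<Rightarrow> (nat \<Rightarrow> real)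
    \<Rightarrow> (nat \<Rightarrow> real) \<Rightarrow> (nat \<Rightarrow> real) \<Rightarrow> (nat \<Rightarrow> real)
    \<Rightarrow> (nat \<Rightarrow> nat) \<times> (nat \<Rightarrow> act) \<Rightarrow> real" where
  "weight k n lam mu alpha beta u v theta w =
     (case w of (x, a) \<Rightarrow>
        thprod theta (busy k n x a)
        * (\<Prod>i=1..k. (lam i / mu i) ^ x i / fact (x i))
        * pfactor n alpha beta u v a)"

definition normB where
  "normB m k n lam mu alpha beta u v theta =
     1 / (\<Sum>w\<in>states m k n. weight k n lam mu alpha beta u v theta w)"

definition probIdle where
  "probIdle m k n lam mu alpha beta u v theta j =
     (\<Sum>w\<in>{w \<in> states m k n. snd w j = Idle}.
        normB m k n lam mu alpha beta u v theta * weight k n lam mu alpha beta u v theta w)"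

text \<open>Special case without non-persistent users: configurations a with at most m transmitting.\<close>
definition pstates :: "nat \<Rightarrow> nat \<Rightarrow> (nat \<Rightarrow> act) set" where
  "pstates m n = {a. (\<forall>j. j \<notin> {1..n} \<longrightarrow> a j = Idle) \<and> nT n a \<le> m}"

definition pweight where
  "pweight n alpha beta u v theta a = thprod theta (nT n a) * pfactor n alpha beta u v a"

definition normBt where
  "normBt m n alpha beta u v theta = 1 / (\<Sum>a\<in>pstates m n. pweight n alpha beta u v theta a)"

definition probIdle_p where
  "probIdle_p m n alpha beta u v theta j =
     (\<Sum>a\<in>{a \<in> pstates m n. a j = Idle}. normBt m n alpha beta u v theta * pweight n alpha beta u v theta a)"

definition cjb :: "nat \<Rightarrow> (nat \<Rightarrow> real) \<Rightarrow> (nat \<Rightarrow> real) \<Rightarrow> (nat \<Rightarrow> real) \<Rightarrow> (nat \<Rightarrow> real)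
    \<Rightarrow> nat \<Rightarrow> nat \<Rightarrow> complex" where
  "cjb n alpha beta u v j b =
     (1 / of_nat n) * (\<Sum>t<n.
        (\<Prod>l\<in>{1..n} - {j}. 1 + complex_of_real (alpha l / beta l)
             + exp (- 2 * of_real pi * \<i> * of_nat t / of_nat n) * complex_of_real (alpha l * u l / (beta l * v l)))
        * exp (2 * of_real pi * \<i> * of_nat t * of_nat b / of_nat n))"

end

theory Submission imports Defs "HOL-Analysis.Analysis" begin

lemma act_UNIV: "(UNIV :: act set) = {Idle, Wait, Trans}"
  using act.exhaust by auto

lemma finite_act_funs: "finite L \<Longrightarrow> finite {a :: nat \<Rightarrow> act. \<forall>l. l \<notin> L \<longrightarrow> a l = Idle}"
proof -
  assume "finite L"
  then have "finite {f :: nat \<Rightarrow> act. \<forall>x. (x \<in> L \<longrightarrow> f x \<in> UNIV) \<and> (x \<notin> L \<longrightarrow> f x = Idle)}"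
    by (intro finite_set_of_finite_funs) (auto simp: act_UNIV)
  then show ?thesis by simp
qed

lemma gen_prod:
  fixes g :: "nat \<Rightarrow> act \<Rightarrow> 'b::comm_ring_1" and z :: 'b
  assumes "finite L"
  shows "(\<Sum>a\<in>{a. \<forall>l. l \<notin> L \<longrightarrow> a l = Idle}. (\<Prod>l\<in>L. g l (a l)) * z ^ card {l\<in>L. a l = Trans})
         = (\<Prod>l\<in>L. g l Idle + g l Wait + z * g l Trans)"
  using assms
proof (induction L rule: finite_induct)
  case empty
  have "{a :: nat \<Rightarrow> act. \<forall>l. l \<notin> {} \<longrightarrow> a l = Idle} = {\<lambda>_. Idle}" by auto
  then show ?case by simp
next
  case (insert i L)
  define S where "S = {a :: nat \<Rightarrow> act. \<forall>l. l \<notin> L \<longrightarrow> a l = Idle}"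
  define F where "F a = (\<Prod>l\<in>L. g l (a l)) * z ^ card {l\<in>L. a l = Trans}" for a
  have fS: "finite S" unfolding S_def using finite_act_funs[OF insert(1)] .
  have "(\<Sum>a\<in>{a. \<forall>l. l \<notin> insert i L \<longrightarrow> a l = Idle}. (\<Prod>l\<in>insert i L. g l (a l)) * z ^ card {l\<in>insert i L. a l = Trans})
      = (\<Sum>p\<in>UNIV \<times> S. (\<Prod>l\<in>insert i L. g l (((snd p)(i := fst p)) l)) * z ^ card {l\<in>insert i L. ((snd p)(i := fst p)) l = Trans})"
    by (rule sum.reindex_bij_witness[where j = "\<lambda>b. (b i, b(i := Idle))" and i = "\<lambda>p. (snd p)(i := fst p)"])
       (use insert(2) in \<open>auto simp: S_def\<close>)
  also have "\<dots> = (\<Sum>p\<in>UNIV \<times> S. (g i (fst p) * z ^ (if fst p = Trans then 1 else 0)) * F (snd p))"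
  proof (rule sum.cong[OF refl])
    fix p :: "act \<times> (nat \<Rightarrow> act)" assume p: "p \<in> UNIV \<times> S"
    obtain s a where pa: "p = (s, a)" by (cases p)
    have ai: "a i = Idle" using p pa insert(2) by (auto simp: S_def)
    have pr0: "(\<Prod>l\<in>L. g l ((a(i := s)) l)) = (\<Prod>l\<in>L. g l (a l))"
      using insert(2) by (intro prod.cong) auto
    have pr: "(\<Prod>l\<in>insert i L. g l ((a(i := s)) l)) = g i s * (\<Prod>l\<in>L. g l (a l))"
      using insert(1,2) by (subst prod.insert) (simp_all only: pr0 fun_upd_same not_False_eq_True)
    have "{l\<in>insert i L. (a(i := s)) l = Trans} = (if s = Trans then insert i {l\<in>L. a l = Trans} else {l\<in>L. a l = Trans})"
      using insert(2) by auto
    then have cd: "card {l\<in>insert i L. (a(i := s)) l = Trans} = card {l\<in>L. a l = Trans} + (if s = Trans then 1 else 0)"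
      using insert(1,2) by (simp add: card_insert_disjoint)
    show "(\<Prod>l\<in>insert i L. g l (((snd p)(i := fst p)) l)) * z ^ card {l\<in>insert i L. ((snd p)(i := fst p)) l = Trans}
        = (g i (fst p) * z ^ (if fst p = Trans then 1 else 0)) * F (snd p)"
      unfolding pa F_def using pr cd by (simp add: power_add algebra_simps)
  qed
  also have "\<dots> = (\<Sum>s\<in>UNIV. g i s * z ^ (if s = Trans then 1 else 0)) * (\<Sum>a\<in>S. F a)"
    by (simp add: sum_product sum.cartesian_product case_prod_beta)
  also have "\<dots> = (g i Idle + g i Wait + z * g i Trans) * (\<Prod>l\<in>L. g l Idle + g l Wait + z * g l Trans)"
    using insert(3) unfolding S_def F_def by (simp add: act_UNIV algebra_simps)
  finally show ?case using insert(1,2) by simp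
qed
lemma rou:
  fixes d :: int and n :: nat
  assumes "n \<ge> 1" "\<bar>d\<bar> < int n"
  shows "(\<Sum>t<n. exp (2 * of_real pi * \<i> * of_nat t * of_int d / of_nat n)) = (if d = 0 then of_nat n else (0::complex))"
proof -
  define r where "r = exp (2 * of_real pi * \<i> * of_int d / of_nat n)"
  have e: "exp (2 * of_real pi * \<i> * of_nat t * of_int d / of_nat n) = r ^ t" for t
    unfolding r_def exp_of_nat_mult[symmetric] by (simp add: field_simps)
  have rn: "r ^ n = 1"
  proof -
    have "r ^ n = exp (of_nat n * (2 * of_real pi * \<i> * of_int d / of_nat n))"
      unfolding r_def exp_of_nat_mult by simp
    also have "\<dots> = exp (2 * of_real pi * \<i> * of_int d)" using assms(1) by (simp add: field_simps)
    also have "\<dots> = 1" by (subst exp_eq_1) (auto intro!: exI[of _ d])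
    finally show ?thesis .
  qed
  show ?thesis
  proof (cases "d = 0")
    case True then show ?thesis by simp
  next
    case False
    have "r \<noteq> 1"
    proof
      assume "r = 1"
      then obtain z :: int where z: "2 * pi * d / n = of_int (2 * z) * pi"
        unfolding r_def exp_eq_1 by auto
      then have "real_of_int d = real_of_int (z * int n)" using assms(1) by (simp add: field_simps)
      then have "d = z * n" by (simp only: of_int_eq_iff)
      then have "z \<noteq> 0" using False by auto
      then have "\<bar>z\<bar> \<ge> 1" by linarith
      then have "\<bar>z\<bar> * int n \<ge> 1 * int n" by (intro mult_right_mono) auto
      then show False using \<open>d = z * n\<close> assms(2) by (simp add: abs_mult)
    qed
    then show ?thesis using False rn by (simp add: e sum_gp_strict)
  qed
qed

lemma exp_comb:
  fixes n t b d :: nat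
  shows "exp (- 2 * of_real pi * \<i> * of_nat t / of_nat n) ^ d * exp (2 * of_real pi * \<i> * of_nat t * of_nat b / of_nat n)
       = exp (2 * of_real pi * \<i> * of_nat t * of_int (int b - int d) / of_nat n)"
proof -
  have "exp (- 2 * of_real pi * \<i> * of_nat t / of_nat n) ^ d = exp (of_nat d * (- 2 * of_real pi * \<i> * of_nat t / of_nat n))"
    by (simp only: exp_of_nat_mult)
  moreover have "of_nat d * (- 2 * of_real pi * \<i> * of_nat t / of_nat n) + 2 * of_real pi * \<i> * of_nat t * of_nat b / of_nat n
     = 2 * of_real pi * \<i> * of_nat t * of_int (int b - int d) / (of_nat n :: complex)"
    by (simp add: algebra_simps diff_divide_distrib add_divide_distrib)
  ultimately show ?thesis by (simp only: exp_add[symmetric])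
qed

definition ecoef where
  "ecoef n alpha beta u v j b = (\<Sum>a\<in>{a. (\<forall>l. l \<notin> {1..n} - {j} \<longrightarrow> a l = Idle) \<and> nT n a = b}. pfactor n alpha beta u v a)"

lemma pfactor_red:
  assumes "j \<in> {1..n}" "\<forall>l. l \<notin> {1..n} - {j} \<longrightarrow> a l = Idle"
  shows "pfactor n alpha beta u v a = (\<Prod>l\<in>{1..n} - {j}. (alpha l / beta l) ^ (if a l = Wait then 1 else 0)
                * (alpha l * u l / (beta l * v l)) ^ (if a l = Trans then 1 else 0))"
  unfolding pfactor_def using assms by (subst prod.remove[of _ j]) auto

lemma nT_red:
  assumes "j \<in> {1..n}" "\<forall>l. l \<notin> {1..n} - {j} \<longrightarrow> a l = Idle"
  shows "nT n a = card {l\<in>{1..n} - {j}. a l = Trans}"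
proof -
  have "{l\<in>{1..n}. a l = Trans} = {l\<in>{1..n} - {j}. a l = Trans}" using assms by auto
  then show ?thesis unfolding nT_def by simp
qed

lemma nT_le:
  assumes "j \<in> {1..n}" "\<forall>l. l \<notin> {1..n} - {j} \<longrightarrow> a l = Idle"
  shows "nT n a \<le> n - 1"
proof -
  have "card {l\<in>{1..n} - {j}. a l = Trans} \<le> card ({1..n} - {j})" by (intro card_mono) auto
  also have "\<dots> = n - 1" using assms(1) by simp
  finally show ?thesis using nT_red[OF assms] by simp
qed

lemma cjb_eq:
  assumes "n \<ge> 1" "j \<in> {1..n}" "b \<le> n - 1"
  shows "cjb n alpha beta u v j b = complex_of_real (ecoef n alpha beta u v j b)"
proof -
  define L where "L = {1..n} - {j}"
  define PP where "PP = {a :: nat \<Rightarrow> act. \<forall>l. l \<notin> L \<longrightarrow> a l = Idle}"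
  define g where "g l s = complex_of_real ((alpha l / beta l) ^ (if s = Wait then 1 else 0)
                * (alpha l * u l / (beta l * v l)) ^ (if s = Trans then 1 else 0))" for l s
  have fL: "finite L" unfolding L_def by simp
  have fPP: "finite PP" unfolding PP_def using finite_act_funs[OF fL] .
  have pfa: "complex_of_real (pfactor n alpha beta u v a) = (\<Prod>l\<in>L. g l (a l))" if "a \<in> PP" for a
    using pfactor_red[OF assms(2), of a] that unfolding PP_def L_def g_def by (simp add: of_real_prod)
  have nTa: "nT n a = card {l\<in>L. a l = Trans}" if "a \<in> PP" for a
    using nT_red[OF assms(2), of a] that unfolding PP_def L_def by simp
  have Q: "(\<Prod>l\<in>{1..n} - {j}. 1 + complex_of_real (alpha l / beta l) + z * complex_of_real (alpha l * u l / (beta l * v l)))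
        = (\<Sum>a\<in>PP. complex_of_real (pfactor n alpha beta u v a) * z ^ nT n a)" for z
  proof -
    have "(\<Sum>a\<in>PP. complex_of_real (pfactor n alpha beta u v a) * z ^ nT n a)
        = (\<Sum>a\<in>PP. (\<Prod>l\<in>L. g l (a l)) * z ^ card {l\<in>L. a l = Trans})"
      by (intro sum.cong) (auto simp: pfa nTa)
    also have "\<dots> = (\<Prod>l\<in>L. g l Idle + g l Wait + z * g l Trans)"
      unfolding PP_def by (rule gen_prod[OF fL])
    finally show ?thesis unfolding L_def g_def by simp
  qed
  define E where "E t = exp (2 * of_real pi * \<i> * of_nat t * of_nat b / of_nat n)" for t :: nat
  define Z where "Z t = exp (- 2 * of_real pi * \<i> * of_nat t / of_nat n)" for t :: nat
  have "cjb n alpha beta u v j b = 1 / of_nat n * (\<Sum>t<n. (\<Sum>a\<in>PP. complex_of_real (pfactor n alpha beta u v a) * Z t ^ nT n a) * E t)"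
    unfolding cjb_def Q[symmetric] E_def Z_def by (simp add: mult.commute)
  also have "\<dots> = (\<Sum>a\<in>PP. complex_of_real (pfactor n alpha beta u v a) *
        (1 / of_nat n * (\<Sum>t<n. exp (2 * of_real pi * \<i> * of_nat t * of_int (int b - int (nT n a)) / of_nat n))))"
    unfolding Z_def E_def exp_comb[symmetric]
    by (simp add: sum_distrib_left sum_distrib_right sum.swap[of _ PP] mult.assoc mult.left_commute)
  also have "\<dots> = (\<Sum>a\<in>PP. complex_of_real (pfactor n alpha beta u v a) * (if nT n a = b then 1 else 0))"
  proof (intro sum.cong refl)
    fix a assume a: "a \<in> PP"
    have "nT n a \<le> n - 1" using nT_le[OF assms(2), of a] a unfolding PP_def L_def by simp
    then have "\<bar>int b - int (nT n a)\<bar> < int n" using assms by linarith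
    then show "complex_of_real (pfactor n alpha beta u v a) *
        (1 / of_nat n * (\<Sum>t<n. exp (2 * of_real pi * \<i> * of_nat t * of_int (int b - int (nT n a)) / of_nat n)))
        = complex_of_real (pfactor n alpha beta u v a) * (if nT n a = b then 1 else 0)"
      using assms(1) by (subst rou) auto
  qed
  also have "\<dots> = (\<Sum>a\<in>{a\<in>PP. nT n a = b}. complex_of_real (pfactor n alpha beta u v a))"
    using fPP by (simp add: sum.inter_filter[symmetric] if_distrib cong: if_cong)
  also have "\<dots> = complex_of_real (ecoef n alpha beta u v j b)"
    unfolding ecoef_def PP_def L_def by (simp add: of_real_sum)
  finally show ?thesis .
qed
lemma finite_Xeq: "finite L \<Longrightarrow> finite {x :: nat \<Rightarrow> nat. (\<forall>i. i \<notin> L \<longrightarrow> x i = 0) \<and> sum x L \<le> s}"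
proof -
  assume fL: "finite L"
  have "{x :: nat \<Rightarrow> nat. (\<forall>i. i \<notin> L \<longrightarrow> x i = 0) \<and> sum x L \<le> s}
     \<subseteq> {f. \<forall>i. (i \<in> L \<longrightarrow> f i \<in> {0..s}) \<and> (i \<notin> L \<longrightarrow> f i = 0)}"
  proof (clarsimp)
    fix x i assume "sum x L \<le> s" "i \<in> L"
    then show "x i \<le> s" using member_le_sum[of i L x] fL by simp
  qed
  moreover have "finite {f :: nat \<Rightarrow> nat. \<forall>i. (i \<in> L \<longrightarrow> f i \<in> {0..s}) \<and> (i \<notin> L \<longrightarrow> f i = 0)}"
    using fL by (intro finite_set_of_finite_funs) auto
  ultimately show ?thesis by (rule finite_subset)
qed

lemma multi:
  fixes rho :: "nat \<Rightarrow> real"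
  assumes "finite L"
  shows "(\<Sum>x\<in>{x. (\<forall>i. i \<notin> L \<longrightarrow> x i = 0) \<and> sum x L = s}. \<Prod>i\<in>L. rho i ^ x i / fact (x i))
         = (\<Sum>i\<in>L. rho i) ^ s / fact s"
  using assms
proof (induction L arbitrary: s rule: finite_induct)
  case empty
  have "{x :: nat \<Rightarrow> nat. (\<forall>i. i \<notin> {} \<longrightarrow> x i = 0) \<and> sum x {} = s} = (if s = 0 then {\<lambda>_. 0} else {})"
    by auto
  then show ?case by simp
next
  case (insert i L)
  define X where "X s = {x :: nat \<Rightarrow> nat. (\<forall>i. i \<notin> L \<longrightarrow> x i = 0) \<and> sum x L = s}" for s
  define F where "F x = (\<Prod>i\<in>L. rho i ^ x i / fact (x i))" for x
  define R where "R = (\<Sum>i\<in>L. rho i)"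
  have fX: "finite (X s)" for s
    by (rule finite_subset[OF _ finite_Xeq[OF insert(1), of s]]) (auto simp: X_def)
  have "(\<Sum>x\<in>{x. (\<forall>l. l \<notin> insert i L \<longrightarrow> x l = 0) \<and> sum x (insert i L) = s}. \<Prod>l\<in>insert i L. rho l ^ x l / fact (x l))
      = (\<Sum>p\<in>Sigma {0..s} (\<lambda>c. X (s - c)). \<Prod>l\<in>insert i L. rho l ^ ((snd p)(i := fst p)) l / fact (((snd p)(i := fst p)) l))"
  proof (rule sum.reindex_bij_witness[where j = "\<lambda>x. (x i, x(i := 0))" and i = "\<lambda>p. (snd p)(i := fst p)"])
    fix x assume x: "x \<in> {x. (\<forall>l. l \<notin> insert i L \<longrightarrow> x l = 0) \<and> sum x (insert i L) = s}"
    have sL: "sum (x(i := 0)) L = sum x L" using insert(2) by (intro sum.cong) auto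
    have "x i + sum x L = s" using x insert(1,2) by simp
    then show "(x i, x(i := 0)) \<in> Sigma {0..s} (\<lambda>c. X (s - c))" using x sL by (auto simp: X_def)
  next
    fix p assume p: "p \<in> Sigma {0..s} (\<lambda>c. X (s - c))"
    obtain c y where pc: "p = (c, y)" by (cases p)
    have sL: "sum (y(i := c)) L = sum y L" using insert(2) by (intro sum.cong) auto
    have yi: "y i = 0" using p pc insert(2) by (auto simp: X_def)
    show "(\<lambda>x. (x i, x(i := 0))) ((snd p)(i := fst p)) = p" using pc yi by auto
    show "(snd p)(i := fst p) \<in> {x. (\<forall>l. l \<notin> insert i L \<longrightarrow> x l = 0) \<and> sum x (insert i L) = s}"
      using p pc sL insert(1,2) by (auto simp: X_def)
  qed auto
  also have "\<dots> = (\<Sum>c=0..s. \<Sum>y\<in>X (s - c). rho i ^ c / fact c * F y)"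
  proof -
    have "(\<Sum>p\<in>Sigma {0..s} (\<lambda>c. X (s - c)). \<Prod>l\<in>insert i L. rho l ^ ((snd p)(i := fst p)) l / fact (((snd p)(i := fst p)) l))
        = (\<Sum>c=0..s. \<Sum>y\<in>X (s - c). \<Prod>l\<in>insert i L. rho l ^ (y(i := c)) l / fact ((y(i := c)) l))"
      using fX by (subst sum.Sigma) (auto simp: case_prod_beta)
    also have "\<dots> = (\<Sum>c=0..s. \<Sum>y\<in>X (s - c). rho i ^ c / fact c * F y)"
    proof (intro sum.cong refl)
      fix c y
      have pr0: "(\<Prod>l\<in>L. rho l ^ (y(i := c)) l / fact ((y(i := c)) l)) = F y"
        unfolding F_def using insert(2) by (intro prod.cong) auto
      show "(\<Prod>l\<in>insert i L. rho l ^ (y(i := c)) l / fact ((y(i := c)) l)) = rho i ^ c / fact c * F y"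
        using insert(1,2) by (subst prod.insert) (simp_all only: pr0 fun_upd_same not_False_eq_True)
    qed
    finally show ?thesis .
  qed
  also have "\<dots> = (\<Sum>c=0..s. rho i ^ c / fact c * (R ^ (s - c) / fact (s - c)))"
  proof (intro sum.cong refl)
    fix c
    have "(\<Sum>y\<in>X (s - c). F y) = R ^ (s - c) / fact (s - c)"
      unfolding X_def F_def R_def by (rule insert.IH)
    then show "(\<Sum>y\<in>X (s - c). rho i ^ c / fact c * F y) = rho i ^ c / fact c * (R ^ (s - c) / fact (s - c))"
      by (simp only: sum_distrib_left[symmetric])
  qed
  also have "\<dots> = (\<Sum>c\<le>s. of_nat (s choose c) * rho i ^ c * R ^ (s - c)) / fact s"
    unfolding sum_divide_distrib atLeast0AtMost
    by (intro sum.cong refl) (simp add: binomial_fact field_simps)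
  also have "\<dots> = (rho i + R) ^ s / fact s" by (simp add: binomial_ring)
  finally show ?case using insert(1,2) by (simp add: R_def)
qed

lemma group_b:
  fixes H :: "nat \<Rightarrow> real"
  assumes "n \<ge> 1" "j \<in> {1..n}"
  shows "(\<Sum>a\<in>{a. (\<forall>l. l \<notin> {1..n} - {j} \<longrightarrow> a l = Idle) \<and> nT n a \<le> m}. pfactor n alpha beta u v a * H (nT n a))
       = (\<Sum>b=0..min (n - 1) m. ecoef n alpha beta u v j b * H b)"
proof -
  define PPm where "PPm = {a. (\<forall>l. l \<notin> {1..n} - {j} \<longrightarrow> a l = Idle) \<and> nT n a \<le> m}"
  have fin: "finite PPm"
    by (rule finite_subset[OF _ finite_act_funs[of "{1..n} - {j}"]]) (auto simp: PPm_def)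
  have img: "(\<lambda>a. nT n a) ` PPm \<subseteq> {0..min (n - 1) m}"
    using nT_le[OF assms(2)] by (auto simp: PPm_def)
  have "(\<Sum>a\<in>PPm. pfactor n alpha beta u v a * H (nT n a))
      = (\<Sum>b=0..min (n - 1) m. \<Sum>a\<in>{a\<in>PPm. nT n a = b}. pfactor n alpha beta u v a * H (nT n a))"
    by (rule sum.group[OF fin _ img, symmetric]) simp
  also have "\<dots> = (\<Sum>b=0..min (n - 1) m. ecoef n alpha beta u v j b * H b)"
  proof (intro sum.cong refl)
    fix b assume b: "b \<in> {0..min (n - 1) m}"
    have "{a\<in>PPm. nT n a = b} = {a. (\<forall>l. l \<notin> {1..n} - {j} \<longrightarrow> a l = Idle) \<and> nT n a = b}"
      using b by (auto simp: PPm_def)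
    then show "(\<Sum>a\<in>{a\<in>PPm. nT n a = b}. pfactor n alpha beta u v a * H (nT n a)) = ecoef n alpha beta u v j b * H b"
      unfolding ecoef_def by (simp add: sum_distrib_right)
  qed
  finally show ?thesis unfolding PPm_def .
qed

lemma inner_x:
  fixes rho :: "nat \<Rightarrow> real" and G :: "nat \<Rightarrow> real"
  shows "(\<Sum>x\<in>{x. (\<forall>i. i \<notin> {1..k} \<longrightarrow> x i = 0) \<and> sum x {1..k} \<le> M}. G (sum x {1..k}) * (\<Prod>i=1..k. rho i ^ x i / fact (x i)))
       = (\<Sum>s=0..M. G s * ((\<Sum>i=1..k. rho i) ^ s / fact s))"
proof -
  define XL where "XL = {x :: nat \<Rightarrow> nat. (\<forall>i. i \<notin> {1..k} \<longrightarrow> x i = 0) \<and> sum x {1..k} \<le> M}"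
  have fin: "finite XL" unfolding XL_def by (rule finite_Xeq) simp
  have img: "(\<lambda>x. sum x {1..k}) ` XL \<subseteq> {0..M}" by (auto simp: XL_def)
  have "(\<Sum>x\<in>XL. G (sum x {1..k}) * (\<Prod>i=1..k. rho i ^ x i / fact (x i)))
     = (\<Sum>s=0..M. \<Sum>x\<in>{x\<in>XL. sum x {1..k} = s}. G (sum x {1..k}) * (\<Prod>i=1..k. rho i ^ x i / fact (x i)))"
    by (rule sum.group[OF fin _ img, symmetric]) simp
  also have "\<dots> = (\<Sum>s=0..M. G s * ((\<Sum>i=1..k. rho i) ^ s / fact s))"
  proof (intro sum.cong refl)
    fix s assume s: "s \<in> {0..M}"
    have e: "{x\<in>XL. sum x {1..k} = s} = {x. (\<forall>i. i \<notin> {1..k} \<longrightarrow> x i = 0) \<and> sum x {1..k} = s}"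
      using s by (auto simp: XL_def)
    have "(\<Sum>x\<in>{x\<in>XL. sum x {1..k} = s}. G (sum x {1..k}) * (\<Prod>i=1..k. rho i ^ x i / fact (x i)))
        = (\<Sum>x\<in>{x\<in>XL. sum x {1..k} = s}. G s * (\<Prod>i=1..k. rho i ^ x i / fact (x i)))"
      by (intro sum.cong) auto
    also have "\<dots> = G s * (\<Sum>x\<in>{x. (\<forall>i. i \<notin> {1..k} \<longrightarrow> x i = 0) \<and> sum x {1..k} = s}. (\<Prod>i=1..k. rho i ^ x i / fact (x i)))"
      unfolding e by (simp add: sum_distrib_left)
    also have "\<dots> = G s * ((\<Sum>i=1..k. rho i) ^ s / fact s)" by (subst multi) auto
    finally show "(\<Sum>x\<in>{x\<in>XL. sum x {1..k} = s}. G (sum x {1..k}) * (\<Prod>i=1..k. rho i ^ x i / fact (x i)))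
        = G s * ((\<Sum>i=1..k. rho i) ^ s / fact s)" .
  qed
  finally show ?thesis unfolding XL_def .
qed


lemma sumw:
  assumes "j \<in> {1..n}"
  shows "(\<Sum>w\<in>{w \<in> states m k n. snd w j = Idle}. weight k n lam mu alpha beta u v theta w)
       = (\<Sum>a\<in>{a. (\<forall>l. l \<notin> {1..n} - {j} \<longrightarrow> a l = Idle) \<and> nT n a \<le> m}.
            pfactor n alpha beta u v a * (\<Sum>s=0..m - nT n a. thprod theta (s + nT n a) * ((\<Sum>i=1..k. lam i / mu i) ^ s / fact s)))"
proof -
  define PPm where "PPm = {a. (\<forall>l. l \<notin> {1..n} - {j} \<longrightarrow> a l = Idle) \<and> nT n a \<le> m}"
  define XL where "XL M = {x :: nat \<Rightarrow> nat. (\<forall>i. i \<notin> {1..k} \<longrightarrow> x i = 0) \<and> sum x {1..k} \<le> M}" for M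
  have finP: "finite PPm"
    by (rule finite_subset[OF _ finite_act_funs[of "{1..n} - {j}"]]) (auto simp: PPm_def)
  have finX: "finite (XL M)" for M unfolding XL_def by (rule finite_Xeq) simp
  have "(\<Sum>w\<in>{w \<in> states m k n. snd w j = Idle}. weight k n lam mu alpha beta u v theta w)
      = (\<Sum>p\<in>Sigma PPm (\<lambda>a. XL (m - nT n a)). weight k n lam mu alpha beta u v theta (snd p, fst p))"
  proof (rule sum.reindex_bij_witness[where j = "\<lambda>w. (snd w, fst w)" and i = "\<lambda>p. (snd p, fst p)"])
    fix w assume w: "w \<in> {w \<in> states m k n. snd w j = Idle}"
    then show "(snd w, fst w) \<in> Sigma PPm (\<lambda>a. XL (m - nT n a))"
      by (auto simp: states_def PPm_def XL_def busy_def)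
  next
    fix p assume p: "p \<in> Sigma PPm (\<lambda>a. XL (m - nT n a))"
    then show "(snd p, fst p) \<in> {w \<in> states m k n. snd w j = Idle}"
      using assms by (auto simp: states_def PPm_def XL_def busy_def)
  qed auto
  also have "\<dots> = (\<Sum>a\<in>PPm. \<Sum>x\<in>XL (m - nT n a). weight k n lam mu alpha beta u v theta (x, a))"
    using finX finP by (subst sum.Sigma) (auto simp: case_prod_beta)
  also have "\<dots> = (\<Sum>a\<in>PPm. pfactor n alpha beta u v a * (\<Sum>x\<in>XL (m - nT n a).
        (\<lambda>s. thprod theta (s + nT n a)) (sum x {1..k}) * (\<Prod>i=1..k. (lam i / mu i) ^ x i / fact (x i))))"
    by (intro sum.cong refl) (simp add: weight_def busy_def sum_distrib_left algebra_simps)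
  also have "\<dots> = (\<Sum>a\<in>PPm. pfactor n alpha beta u v a * (\<Sum>s=0..m - nT n a. thprod theta (s + nT n a) * ((\<Sum>i=1..k. lam i / mu i) ^ s / fact s)))"
    unfolding XL_def by (subst inner_x) simp
  finally show ?thesis unfolding PPm_def .
qed

theorem lemma3:
  fixes m k n j :: nat
    and lam mu alpha beta u v theta :: "nat \<Rightarrow> real"
  assumes "m \<ge> 1" "k \<ge> 1" "n \<ge> 1"
    and "\<forall>i\<in>{1..k}. lam i > 0 \<and> mu i > 0"
    and "\<forall>l\<in>{1..n}. alpha l > 0 \<and> beta l > 0 \<and> u l > 0 \<and> v l > 0"
    and "\<forall>b\<in>{0..m}. 0 \<le> theta b \<and> theta b \<le> 1"
    and "\<forall>b<m. theta b > 0"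
    and "theta m = 0"
    and "j \<in> {1..n}"
  shows "complex_of_real (probIdle m k n lam mu alpha beta u v theta j)
           = complex_of_real (normB m k n lam mu alpha beta u v theta)
             * (\<Sum>b=0..min (n - 1) m. \<Sum>x=0..m - b.
                  complex_of_real (thprod theta (x + b) * (\<Sum>i=1..k. lam i / mu i) ^ x / fact x)
                  * cjb n alpha beta u v j b)
         \<and> complex_of_real (probIdle_p m n alpha beta u v theta j)
           = complex_of_real (normBt m n alpha beta u v theta)
             * (\<Sum>b=0..min (n - 1) m. complex_of_real (thprod theta b) * cjb n alpha beta u v j b)"
proof
  have cj: "cjb n alpha beta u v j b = complex_of_real (ecoef n alpha beta u v j b)" if "b \<in> {0..min (n - 1) m}" for b
    using cjb_eq[OF assms(3,9)] that by simp
  define rho where "rho = (\<Sum>i=1..k. lam i / mu i)"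
  have "(\<Sum>w\<in>{w \<in> states m k n. snd w j = Idle}. weight k n lam mu alpha beta u v theta w)
      = (\<Sum>b=0..min (n - 1) m. ecoef n alpha beta u v j b * (\<Sum>s=0..m - b. thprod theta (s + b) * (rho ^ s / fact s)))"
    unfolding sumw[OF assms(9)] rho_def
    by (rule group_b[OF assms(3,9), where H = "\<lambda>b. \<Sum>s=0..m - b. thprod theta (s + b) * ((\<Sum>i=1..k. lam i / mu i) ^ s / fact s)"])
  then have "complex_of_real (\<Sum>w\<in>{w \<in> states m k n. snd w j = Idle}. weight k n lam mu alpha beta u v theta w)
      = (\<Sum>b=0..min (n - 1) m. \<Sum>x=0..m - b.
                  complex_of_real (thprod theta (x + b) * rho ^ x / fact x) * cjb n alpha beta u v j b)"
    by (simp add: of_real_sum cj sum_distrib_left sum_distrib_right mult.commute)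
  then show "complex_of_real (probIdle m k n lam mu alpha beta u v theta j)
           = complex_of_real (normB m k n lam mu alpha beta u v theta)
             * (\<Sum>b=0..min (n - 1) m. \<Sum>x=0..m - b.
                  complex_of_real (thprod theta (x + b) * (\<Sum>i=1..k. lam i / mu i) ^ x / fact x)
                  * cjb n alpha beta u v j b)"
    unfolding probIdle_def rho_def by (simp add: sum_distrib_left[symmetric])
next
  have cj: "cjb n alpha beta u v j b = complex_of_real (ecoef n alpha beta u v j b)" if "b \<in> {0..min (n - 1) m}" for b
    using cjb_eq[OF assms(3,9)] that by simp
  have e: "{a \<in> pstates m n. a j = Idle} = {a. (\<forall>l. l \<notin> {1..n} - {j} \<longrightarrow> a l = Idle) \<and> nT n a \<le> m}"
    using assms(9) by (auto simp: pstates_def)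
  have "(\<Sum>a\<in>{a \<in> pstates m n. a j = Idle}. pweight n alpha beta u v theta a)
      = (\<Sum>b=0..min (n - 1) m. ecoef n alpha beta u v j b * thprod theta b)"
    unfolding e pweight_def
    using group_b[OF assms(3,9), where H = "\<lambda>b. thprod theta b"] by (simp add: mult.commute)
  then have "complex_of_real (\<Sum>a\<in>{a \<in> pstates m n. a j = Idle}. pweight n alpha beta u v theta a)
      = (\<Sum>b=0..min (n - 1) m. complex_of_real (thprod theta b) * cjb n alpha beta u v j b)"
    by (simp add: of_real_sum cj mult.commute)
  then show "complex_of_real (probIdle_p m n alpha beta u v theta j)
           = complex_of_real (normBt m n alpha beta u v theta)
             * (\<Sum>b=0..min (n - 1) m. complex_of_real (thprod theta b) * cjb n alpha beta u v j b)"
    unfolding probIdle_p_def by (simp add: sum_distrib_left[symmetric])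
qed

end
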